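(* Let $f:\mathbb{R}^m\to\mathbb{R}\cup\{+\infty\}$ be a proper lower semicontinuous convex function such that $\mathrm{bdry}(S_f)\subseteq f^{-1}(0)$. Then the following are equivalent: (i) there exists $\tau\in(0,+\infty)$ such that $\inf\left\{\left|\min_{\|h\|=1}f'(\bar x,h)\right|:\bar x\in\mathrm{bdry}(S_f)\right\}>\tau$ and the following qualification condition (QC) holds: for any sequence $\{z_k\}\subseteq S_f\setminus\mathrm{bdry}(S_f)$ for which there is a sequence $\{x_k\}\subseteq\mathrm{bdry}(S_f)$ with $\lim_{k\to\infty}\frac{f(z_k)-f(x_k)}{\|z_k-x_k\|}=0$, one has $\liminf_{k\to\infty}\left|\min_{\|h\|=1}f'(z_k,h)\right|>\tau$; (ii) there exist constants $c,\varepsilon\in(0,+\infty)$ such that for every proper lsc convex $g:\mathbb{R}^m\to\mathbb{R}\cup\{+\infty\}$ satisfying $\mathrm{bdry}(S_f)\cap g^{-1}(0)\neq\emptyset$ and $\mathrm{Lip}(f-g)<\varepsilon$, one has $\tau_{\min}(g)\le c$; (iii) there exist constants $c,\varepsilon>0$ such that for every $\bar x\in\mathrm{bdry}(S_f)$ and every $u\in\mathbb{R}^m$ with $\|u\|\le1$, one has $\tau_{\min}(g_{u,\varepsilon})\le c$, where $g_{u,\varepsilon}(x):=f(x)+\varepsilon\langle u,x-\bar x\rangle$ for all $x\in\mathbb{R}^m$.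
   Context: $\mathbb{R}^m$ carries the Euclidean norm, $d(x,D)=\inf\{\|x-y\|:y\in D\}$, $\mathrm{bdry}(D)$ is the boundary of $D$. $f'(\bar x,h):=\lim_{t\to0^+}\frac{f(\bar x+th)-f(\bar x)}{t}$ is the directional derivative. For a proper lsc convex $g$, $S_g:=\{x: g(x)\le0\}$ and the global error bound modulus is $\tau_{\min}(g):=\inf\{\tau>0: d(x,S_g)\le\tau[g(x)]_+\ \forall x\in\mathbb{R}^m\}$, where $[t]_+=\max\{t,0\}$ and $\inf\emptyset=+\infty$. For a map $\phi$, $\mathrm{Lip}(\phi):=\sup_{u\neq v}\frac{|\phi(u)-\phi(v)|}{\|u-v\|}$. *)

theory Defs
  imports "HOL-Analysis.Analysis" "HOL-Library.Extended_Real" "HOL-Library.Liminf_Limsup"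
begin

definition proper_fn :: "('a \<Rightarrow> ereal) \<Rightarrow> bool" where
  "proper_fn f \<longleftrightarrow> (\<exists>x. f x \<noteq> \<infinity>) \<and> (\<forall>x. f x \<noteq> -\<infinity>)"

definition lsc_fn :: "('a::topological_space \<Rightarrow> ereal) \<Rightarrow> bool" where
  "lsc_fn f \<longleftrightarrow> (\<forall>x. \<forall>a. a < f x \<longrightarrow> eventually (\<lambda>y. a < f y) (at x))"

definition convex_fn :: "('a::real_vector \<Rightarrow> ereal) \<Rightarrow> bool" where
  "convex_fn f \<longleftrightarrow> (\<forall>x y. \<forall>t\<in>{0<..<1::real}.
      f ((1 - t) *\<^sub>R x + t *\<^sub>R y) \<le> ereal (1 - t) * f x + ereal t * f y)"

definition sublevel0 :: "('a \<Rightarrow> ereal) \<Rightarrow> 'a set" where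
  "sublevel0 f = {x. f x \<le> 0}"

definition dirderiv :: "('a::real_normed_vector \<Rightarrow> ereal) \<Rightarrow> 'a \<Rightarrow> 'a \<Rightarrow> ereal" where
  "dirderiv f x h = Lim (at_right (0::real)) (\<lambda>t. (f (x + t *\<^sub>R h) - f x) / ereal t)"

text \<open>\<open>min_{\<parallel>h\<parallel>=1} f'(x,h)\<close>, rendered as an infimum over the unit sphere.\<close>
definition min_dirderiv :: "('a::real_normed_vector \<Rightarrow> ereal) \<Rightarrow> 'a \<Rightarrow> ereal" where
  "min_dirderiv f x = (INF h\<in>sphere 0 1. dirderiv f x h)"

text \<open>Global error bound modulus; \<open>Inf {} = \<infinity>\<close>.\<close>
definition tau_min :: "('a::euclidean_space \<Rightarrow> ereal) \<Rightarrow> ereal" where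
  "tau_min g = (INF \<tau>\<in>{\<tau>::real. \<tau> > 0 \<and>
      (\<forall>x. ereal (infdist x (sublevel0 g)) \<le> ereal \<tau> * max 0 (g x))}. ereal \<tau>)"

definition Lip :: "('a::real_normed_vector \<Rightarrow> real) \<Rightarrow> ereal" where
  "Lip \<phi> = (SUP p\<in>{(u, v). u \<noteq> v}. ereal (\<bar>\<phi> (fst p) - \<phi> (snd p)\<bar> / norm (fst p - snd p)))"

end

theory Submission
  imports Defs
begin

definition dq :: "('a::real_normed_vector \<Rightarrow> ereal) \<Rightarrow> 'a \<Rightarrow> 'a \<Rightarrow> real \<Rightarrow> ereal" where
  "dq f x h t = (f (x + t *\<^sub>R h) - f x) / ereal t"

lemma ereal_q: "t \<noteq> 0 \<Longrightarrow> (ereal a - ereal b) / ereal t = ereal ((a - b) / t)"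
  by (simp add: divide_ereal_def divide_inverse)

lemma ereal_inf_q: "t > 0 \<Longrightarrow> (\<infinity> - ereal b) / ereal t = \<infinity>"
  by (simp add: divide_ereal_def)

lemma dq_mono:
  fixes f :: "'a::real_normed_vector \<Rightarrow> ereal"
  assumes pr: "proper_fn f" and cv: "convex_fn f" and fx: "f x = ereal a"
    and st: "0 < s" "s < t"
  shows "dq f x h s \<le> dq f x h t"
proof (cases "f (x + t *\<^sub>R h)")
  case PInf
  then show ?thesis using st by (simp add: dq_def fx divide_ereal_def)
next
  case MInf
  then show ?thesis using pr unfolding proper_fn_def by auto
next
  case (real b)
  define l where "l = s / t"
  have l: "l \<in> {0<..<1}" using st by (auto simp: l_def)
  have pt: "(1 - l) *\<^sub>R x + l *\<^sub>R (x + t *\<^sub>R h) = x + s *\<^sub>R h"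
    using st by (simp add: l_def algebra_simps)
  have "f (x + s *\<^sub>R h) \<le> ereal (1 - l) * f x + ereal l * f (x + t *\<^sub>R h)"
    using cv l unfolding convex_fn_def by (metis pt)
  also have "\<dots> = ereal ((1 - l) * a + l * b)" by (simp add: fx real)
  finally have le: "f (x + s *\<^sub>R h) \<le> ereal ((1 - l) * a + l * b)" .
  obtain c where c: "f (x + s *\<^sub>R h) = ereal c" "c \<le> (1 - l) * a + l * b"
    using le pr unfolding proper_fn_def by (cases "f (x + s *\<^sub>R h)") auto
  have "(c - a) / s \<le> (b - a) / t"
  proof -
    have "c - a \<le> l * (b - a)" using c(2) by (simp add: algebra_simps)
    then have "(c - a) / s \<le> l * (b - a) / s" using st by (simp add: divide_right_mono)
    also have "\<dots> = (b - a) / t" using st by (simp add: l_def field_simps)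
    finally show ?thesis .
  qed
  then show ?thesis using st by (simp add: dq_def fx real c ereal_q)
qed

lemma dirderiv_INF:
  fixes f :: "'a::real_normed_vector \<Rightarrow> ereal"
  assumes pr: "proper_fn f" and cv: "convex_fn f" and fx: "f x = ereal a"
  shows "dirderiv f x h = (INF t\<in>{0<..}. dq f x h t)"
proof -
  let ?I = "INF t\<in>{0<..}. dq f x h t"
  have "((\<lambda>t. dq f x h t) \<longlongrightarrow> ?I) (at_right 0)"
  proof (rule order_tendstoI)
    fix b assume "b < ?I"
    then have "\<forall>t>0. b < dq f x h t"
      by (metis greaterThan_iff INF_lower order_less_le_trans)
    then show "eventually (\<lambda>t. b < dq f x h t) (at_right 0)"
      unfolding eventually_at_right_field by (metis zero_less_one)
  next
    fix b assume "?I < b"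
    then obtain t0 where t0: "t0 > 0" "dq f x h t0 < b"
      unfolding INF_less_iff by auto
    have "\<forall>t>0. t < t0 \<longrightarrow> dq f x h t < b"
      using dq_mono[OF pr cv fx, of _ t0 h] t0 by (meson order_le_less_trans)
    then show "eventually (\<lambda>t. dq f x h t < b) (at_right 0)"
      unfolding eventually_at_right_field using t0 by blast
  qed
  then show ?thesis
    unfolding dirderiv_def dq_def[symmetric] by (intro tendsto_Lim) auto
qed

lemma dirderiv_le_dq:
  fixes f :: "'a::real_normed_vector \<Rightarrow> ereal"
  assumes "proper_fn f" "convex_fn f" "f x = ereal a" "0 < t"
  shows "dirderiv f x h \<le> dq f x h t"
  using assms by (simp add: dirderiv_INF INF_lower)

lemma dirderiv_lessD:
  fixes f :: "'a::real_normed_vector \<Rightarrow> ereal"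
  assumes "proper_fn f" "convex_fn f" "f x = ereal a" "dirderiv f x h < b"
  shows "\<exists>t>0. dq f x h t < b"
  using assms by (simp add: dirderiv_INF INF_less_iff) (meson greaterThan_iff)

lemma mdd_le: "h \<in> sphere 0 1 \<Longrightarrow> min_dirderiv f x \<le> dirderiv f x h"
  unfolding min_dirderiv_def by (rule INF_lower)

lemma mdd_lessD: "min_dirderiv f x < b \<Longrightarrow> \<exists>h\<in>sphere 0 1. dirderiv f x h < b"
  unfolding min_dirderiv_def by (simp add: INF_less_iff)

lemma lsc_closed:
  fixes g :: "'a::metric_space \<Rightarrow> ereal"
  assumes "lsc_fn g"
  shows "closed {x. g x \<le> a}"
proof -
  have "open {x. a < g x}"
    unfolding open_dist
  proof safe
    fix x assume "a < g x"
    then have "eventually (\<lambda>y. a < g y) (at x)" using assms unfolding lsc_fn_def by blast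
    then obtain d where d: "d > 0" "\<And>y. y \<noteq> x \<Longrightarrow> dist y x < d \<Longrightarrow> a < g y"
      unfolding eventually_at by blast
    show "\<exists>e>0. \<forall>y. dist y x < e \<longrightarrow> y \<in> {x. a < g x}"
      using d \<open>a < g x\<close> by (metis mem_Collect_eq)
  qed
  then show ?thesis
    by (simp add: closed_def Collect_neg_eq[symmetric] not_le)
qed

lemma closed_sublevel0: "lsc_fn (g::'a::metric_space \<Rightarrow> ereal) \<Longrightarrow> closed (sublevel0 g)"
  unfolding sublevel0_def by (rule lsc_closed)

lemma convex_sublevel0:
  assumes pr: "proper_fn g" and cv: "convex_fn g"
  shows "convex (sublevel0 g)"
  unfolding convex_alt sublevel0_def
proof safe
  fix x y :: 'a and u :: real
  assume x: "g x \<le> 0" and y: "g y \<le> 0" and u: "0 \<le> u" "u \<le> 1"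
  show "g ((1 - u) *\<^sub>R x + u *\<^sub>R y) \<le> 0"
  proof (cases "u = 0 \<or> u = 1")
    case True then show ?thesis using x y by auto
  next
    case False
    then have "u \<in> {0<..<1}" using u by auto
    then have "g ((1 - u) *\<^sub>R x + u *\<^sub>R y) \<le> ereal (1 - u) * g x + ereal u * g y"
      using cv unfolding convex_fn_def by blast
    also have "\<dots> \<le> 0"
    proof -
      have "ereal (1 - u) * g x \<le> 0" using x u by (simp add: ereal_mult_le_0_iff)
      moreover have "ereal u * g y \<le> 0" using y u by (simp add: ereal_mult_le_0_iff)
      ultimately show ?thesis by (metis add_mono add.right_neutral order_trans order_refl)
    qed
    finally show ?thesis .
  qed
qed

lemma closest_point_frontier:
  fixes S :: "'a::euclidean_space set"
  assumes "closed S" "S \<noteq> {}" "y \<notin> S"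
  shows "closest_point S y \<in> frontier S"
proof -
  let ?p = "closest_point S y"
  have pS: "?p \<in> S" using closest_point_in_set assms by blast
  have r: "dist y ?p > 0" using pS assms(3) by auto
  have "?p \<notin> interior S"
  proof
    assume "?p \<in> interior S"
    then obtain e where e: "e > 0" "ball ?p e \<subseteq> S" using mem_interior by blast
    define r where "r = dist y ?p"
    define m where "m = min (e/2) (r/2)"
    define z where "z = ?p + (m / r) *\<^sub>R (y - ?p)"
    have rp: "r > 0" using r r_def by simp
    have m: "m > 0" "m < e" "m < r" using e rp by (auto simp: m_def)
    have nz: "norm (y - ?p) = r" by (simp add: r_def dist_norm)
    have "dist ?p z = m" using rp m by (simp add: z_def dist_norm nz)
    then have "z \<in> S" using e m by auto
    have "y - z = (1 - m / r) *\<^sub>R (y - ?p)" by (simp add: z_def algebra_simps)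
    then have "dist y z = (1 - m/r) * r" using rp m by (simp add: dist_norm nz)
    also have "\<dots> < r" using rp m by (simp add: algebra_simps)
    finally have "dist y z < dist y ?p" by (simp add: r_def)
    then show False using closest_point_le[OF assms(1) \<open>z \<in> S\<close>, of y] by simp
  qed
  then show ?thesis using pS assms(1) by (simp add: frontier_def closure_closed)
qed

lemma infdist_closest:
  fixes S :: "'a::euclidean_space set"
  assumes "closed S" "S \<noteq> {}"
  shows "infdist y S = dist y (closest_point S y)"
proof (rule antisym)
  show "infdist y S \<le> dist y (closest_point S y)"
    by (rule infdist_le, rule closest_point_in_set[OF assms])
  show "dist y (closest_point S y) \<le> infdist y S"
    unfolding infdist_notempty[OF assms(2)]
    by (rule cINF_greatest[OF assms(2)]) (rule closest_point_le[OF assms(1)])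
qed

lemma proper_pert:
  assumes "proper_fn f"
  shows "proper_fn (\<lambda>x. f x + ereal (\<psi> x))"
  using assms unfolding proper_fn_def by (metis ereal_plus_eq_PInfty ereal_plus_eq_MInfty MInfty_neq_ereal(1) PInfty_neq_ereal(1))

lemma lsc_pert:
  fixes f :: "'a::metric_space \<Rightarrow> ereal"
  assumes pr: "proper_fn f" and ls: "lsc_fn f" and ct: "continuous_on UNIV \<psi>"
  shows "lsc_fn (\<lambda>x. f x + ereal (\<psi> x))"
  unfolding lsc_fn_def
proof (intro allI impI)
  fix x a assume a: "a < f x + ereal (\<psi> x)"
  show "eventually (\<lambda>y. a < f y + ereal (\<psi> y)) (at x)"
  proof (cases a)
    case MInf
    have "\<forall>y. a < f y + ereal (\<psi> y)" using pr MInf unfolding proper_fn_def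
      by (metis ereal_MInfty_lessI ereal_plus_eq_MInfty MInfty_neq_ereal(1))
    then show ?thesis by simp
  next
    case PInf then show ?thesis using a by simp
  next
    case (real r)
    then have lt: "ereal (r - \<psi> x) < f x" using a
      by (cases "f x") auto
    obtain d where d: "d > 0" "ereal (r - \<psi> x + d) < f x"
    proof (cases "f x")
      case (real b) then show ?thesis using lt by (intro that[of "(b - (r - \<psi> x))/2"]) (auto simp: field_simps)
    next
      case PInf then show ?thesis using that[of 1] by auto
    next
      case MInf then show ?thesis using lt by auto
    qed
    have e1: "eventually (\<lambda>y. ereal (r - \<psi> x + d) < f y) (at x)"
      using ls d unfolding lsc_fn_def by blast
    have "(\<psi> \<longlongrightarrow> \<psi> x) (at x)" using ct by (simp add: continuous_on_def)
    then have e2: "eventually (\<lambda>y. dist (\<psi> y) (\<psi> x) < d) (at x)"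
      using d(1) by (rule tendstoD)
    show ?thesis
    proof (rule eventually_mono[OF eventually_conj[OF e1 e2]])
      fix y assume y: "ereal (r - \<psi> x + d) < f y \<and> dist (\<psi> y) (\<psi> x) < d"
      then have "\<psi> y > \<psi> x - d" by (simp add: dist_real_def abs_less_iff)
      show "a < f y + ereal (\<psi> y)"
      proof (cases "f y")
        case (real c)
        then show ?thesis using y \<open>\<psi> y > \<psi> x - d\<close> \<open>a = ereal r\<close> by simp
      qed (use y \<open>a = ereal r\<close> in auto)
    qed
  qed
qed

lemma convex_pert:
  fixes f :: "'a::real_vector \<Rightarrow> ereal"
  assumes pr: "proper_fn f" and cv: "convex_fn f"
    and aff: "\<And>x y t. \<psi> ((1 - t) *\<^sub>R x + t *\<^sub>R y) = (1 - t) * \<psi> x + t * \<psi> y"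
  shows "convex_fn (\<lambda>x. f x + ereal (\<psi> x))"
  unfolding convex_fn_def
proof (intro allI ballI)
  fix x y :: 'a and t :: real assume t: "t \<in> {0<..<1}"
  let ?z = "(1 - t) *\<^sub>R x + t *\<^sub>R y"
  have fz: "f ?z \<le> ereal (1 - t) * f x + ereal t * f y" using cv t unfolding convex_fn_def by blast
  have nm: "f x \<noteq> -\<infinity>" "f y \<noteq> -\<infinity>" "f ?z \<noteq> -\<infinity>" using pr unfolding proper_fn_def by auto
  have "f ?z + ereal (\<psi> ?z) \<le> ereal (1 - t) * f x + ereal t * f y + ereal ((1 - t) * \<psi> x + t * \<psi> y)"
    using fz aff by (simp add: add_right_mono)
  also have "\<dots> = ereal (1 - t) * (f x + ereal (\<psi> x)) + ereal t * (f y + ereal (\<psi> y))"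
    using t nm by (cases "f x"; cases "f y") (auto simp: algebra_simps)
  finally show "f ?z + ereal (\<psi> ?z) \<le> ereal (1 - t) * (f x + ereal (\<psi> x)) + ereal t * (f y + ereal (\<psi> y))" .
qed

lemma lsc_min_exists:
  fixes g :: "'a::metric_space \<Rightarrow> ereal"
  assumes ls: "lsc_fn g" and K: "compact K" "K \<noteq> {}"
  shows "\<exists>y\<in>K. \<forall>z\<in>K. g y \<le> g z"
proof -
  define m where "m = (INF z\<in>K. g z)"
  define F where "F = (\<lambda>a. {x. g x \<le> a}) ` {a. m < a}"
  have cl: "\<And>T. T\<in>F \<Longrightarrow> closed T" unfolding F_def using lsc_closed[OF ls] by auto
  have fip: "K \<inter> \<Inter>F' \<noteq> {}" if fin: "finite F'" and sub: "F' \<subseteq> F" for F'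
  proof -
    obtain A where A: "A \<subseteq> {a. m < a}" "finite A" "F' = (\<lambda>a. {x. g x \<le> a}) ` A"
      using finite_subset_image[OF fin sub[unfolded F_def]] by blast
    show ?thesis
    proof (cases "A = {}")
      case True then show ?thesis using A K by auto
    next
      case False
      have "m < Min A" using A False by auto
      then obtain z where z: "z \<in> K" "g z < Min A" unfolding m_def INF_less_iff by auto
      then have "z \<in> K \<inter> \<Inter>F'" using A False by auto
      then show ?thesis by auto
    qed
  qed
  have "K \<inter> \<Inter>F \<noteq> {}"
    by (rule compact_imp_fip[OF K(1)]) (use cl fip in auto)
  then obtain y where y: "y \<in> K" "y \<in> \<Inter>F" by auto
  have "g y \<le> m"
  proof (rule ccontr)
    assume "\<not> g y \<le> m"
    then have "m < g y" by simp
    then obtain a where "m < a" "a < g y" using dense by blast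
    then show False using y(2) unfolding F_def by auto
  qed
  then show ?thesis using y(1) unfolding m_def by (meson INF_lower order_trans)
qed

lemma dq_fin:
  assumes "g y = ereal a" "t > 0" "g (y + t *\<^sub>R h) = ereal w"
  shows "dq g y h t = ereal ((w - a) / t)"
  using assms by (simp add: dq_def ereal_q)

lemma dq_lessD:
  assumes pr: "proper_fn g" and gy: "g y = ereal a" and t: "t > 0" and lt: "dq g y h t < ereal b"
  shows "\<exists>w. g (y + t *\<^sub>R h) = ereal w \<and> (w - a) / t < b"
proof (cases "g (y + t *\<^sub>R h)")
  case (real w) then show ?thesis using lt gy t by (simp add: dq_fin)
next
  case PInf then show ?thesis using lt gy t by (simp add: dq_def divide_ereal_def)
next
  case MInf then show ?thesis using pr unfolding proper_fn_def by auto
qed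

lemma dq_leD:
  assumes pr: "proper_fn g" and gy: "g y = ereal a" and t: "t > 0" and lt: "dq g y h t \<le> ereal b"
  shows "\<exists>w. g (y + t *\<^sub>R h) = ereal w \<and> (w - a) / t \<le> b"
proof (cases "g (y + t *\<^sub>R h)")
  case (real w) then show ?thesis using lt gy t by (simp add: dq_fin)
next
  case PInf then show ?thesis using lt gy t by (simp add: dq_def divide_ereal_def)
next
  case MInf then show ?thesis using pr unfolding proper_fn_def by auto
qed

lemma dq_gtD:
  assumes pr: "proper_fn g" and gy: "g y = ereal a" and t: "t > 0" and lt: "ereal b < dq g y h t"
  shows "g (y + t *\<^sub>R h) = \<infinity> \<or> (\<exists>w. g (y + t *\<^sub>R h) = ereal w \<and> b < (w - a) / t)"
proof (cases "g (y + t *\<^sub>R h)")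
  case (real w) then show ?thesis using lt gy t by (simp add: dq_fin)
next
  case PInf then show ?thesis by simp
next
  case MInf then show ?thesis using pr unfolding proper_fn_def by auto
qed

lemma unit_dir:
  fixes v :: "'a::real_normed_vector"
  assumes "v \<noteq> 0"
  shows "(1 / norm v) *\<^sub>R v \<in> sphere 0 1" "y + norm v *\<^sub>R ((1 / norm v) *\<^sub>R v) = y + v"
  using assms by auto

lemma ereal_abs_gt:
  fixes m :: ereal
  assumes "ereal \<tau> < \<bar>m\<bar>" "\<tau> \<ge> 0"
  shows "ereal \<tau> < m \<or> m < ereal (-\<tau>)"
  using assms by (cases m) auto

lemma sharp:
  fixes f :: "'a::real_normed_vector \<Rightarrow> ereal"
  assumes pr: "proper_fn f" and cv: "convex_fn f" and fy: "f y = ereal a"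
    and m: "ereal \<tau> < min_dirderiv f y" and zy: "z \<noteq> y"
  shows "ereal (a + \<tau> * norm (z - y)) < f z"
proof -
  define n where "n = norm (z - y)"
  define d where "d = (1 / n) *\<^sub>R (z - y)"
  have n: "n > 0" using zy by (simp add: n_def)
  have d: "d \<in> sphere 0 1" "y + n *\<^sub>R d = z" using unit_dir(1)[of "z - y"] zy by (auto simp: d_def n_def)
  have "ereal \<tau> < dq f y d n"
    using m mdd_le[OF d(1), of f y] dirderiv_le_dq[OF pr cv fy n, of d] by (meson less_le_trans)
  from dq_gtD[OF pr fy n this] d(2)
  have "f z = \<infinity> \<or> (\<exists>w. f z = ereal w \<and> \<tau> < (w - a) / n)" by simp
  then show ?thesis
  proof
    assume "f z = \<infinity>" then show ?thesis by simp
  next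
    assume "\<exists>w. f z = ereal w \<and> \<tau> < (w - a) / n"
    then obtain w where "f z = ereal w" "\<tau> < (w - a) / n" by blast
    then show ?thesis using n by (simp add: n_def[symmetric] field_simps)
  qed
qed

lemma eb_from_slope:
  fixes g :: "'a::euclidean_space \<Rightarrow> ereal"
  assumes pr: "proper_fn g" and ls: "lsc_fn g" and cv: "convex_fn g"
    and ne: "sublevel0 g \<noteq> {}" and sg: "\<sigma> > 0"
    and sl: "\<And>y. 0 < g y \<Longrightarrow> g y < \<infinity> \<Longrightarrow> \<exists>h\<in>sphere 0 1. dirderiv g y h < ereal (-\<sigma>)"
  shows "tau_min g \<le> ereal (1 / \<sigma>)"
proof -
  let ?S = "sublevel0 g"
  have main: "infdist x ?S \<le> a / \<sigma>" if gx: "g x = ereal a" "a > 0" for x a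
  proof (rule ccontr)
    define d where "d = infdist x ?S"
    assume "\<not> infdist x ?S \<le> a / \<sigma>"
    then have dgt: "a / \<sigma> < d" by (simp add: d_def)
    obtain \<rho> where \<rho>: "a / \<sigma> < \<rho>" "\<rho> < d" using dgt dense by blast
    have \<rho>0: "\<rho> > 0" using \<rho> gx sg by (smt (verit) divide_pos_pos)
    have a\<rho>: "a / \<rho> < \<sigma>" using \<rho> sg \<rho>0 by (simp add: field_simps)
    obtain s where s: "a / \<rho> < s" "s < \<sigma>" using a\<rho> dense by blast
    have s0: "s > 0" using s gx \<rho>0 by (smt (verit) divide_pos_pos)
    have as: "a < \<rho> * s" using s(1) \<rho>0 by (simp add: field_simps)
    define \<psi> where "\<psi> = (\<lambda>z. g z + ereal (s * dist z x))"
    have lsc\<psi>: "lsc_fn \<psi>" unfolding \<psi>_def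
      by (rule lsc_pert[OF pr ls]) (intro continuous_intros)
    obtain y where y: "y \<in> cball x \<rho>" "\<And>z. z \<in> cball x \<rho> \<Longrightarrow> \<psi> y \<le> \<psi> z"
      using lsc_min_exists[OF lsc\<psi>, of "cball x \<rho>"] \<rho>0 by auto
    have notS: "0 < g z" if "z \<in> cball x \<rho>" for z
    proof (rule ccontr)
      assume "\<not> 0 < g z"
      then have "z \<in> ?S" by (simp add: sublevel0_def)
      then have "d \<le> dist x z" unfolding d_def by (rule infdist_le)
      then show False using that \<rho> by (simp add: dist_commute)
    qed
    have "\<psi> y \<le> \<psi> x" using y(2)[of x] \<rho>0 by simp
    also have "\<psi> x = ereal a" by (simp add: \<psi>_def gx)
    finally have \<psi>y: "\<psi> y \<le> ereal a" .
    obtain b where gyb: "g y = ereal b"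
      using \<psi>y pr unfolding proper_fn_def \<psi>_def by (cases "g y") auto
    have b0: "b > 0" using notS[OF y(1)] gyb by simp
    have \<psi>yb: "\<psi> y = ereal (b + s * dist y x)" by (simp add: \<psi>_def gyb)
    have dyx: "dist y x < \<rho>"
    proof (rule ccontr)
      assume "\<not> dist y x < \<rho>"
      then have "dist y x = \<rho>" using y(1) by (simp add: dist_commute)
      then have "a < b + s * dist y x" using as b0 s0 by (simp add: mult.commute)
      then show False using \<psi>y \<psi>yb by simp
    qed
    obtain h where h: "h \<in> sphere 0 1" "dirderiv g y h < ereal (-\<sigma>)"
      using sl[of y] b0 gyb by auto
    obtain t0 where t0: "t0 > 0" "dq g y h t0 < ereal (-\<sigma>)"
      using dirderiv_lessD[OF pr cv gyb h(2)] by auto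
    define t where "t = min t0 ((\<rho> - dist y x) / 2)"
    have hh: "(\<rho> - dist y x) / 2 < \<rho> - dist y x" "(\<rho> - dist y x) / 2 > 0" using dyx by simp_all
    have t3: "t < \<rho> - dist y x" unfolding t_def by (rule le_less_trans[OF min.cobounded2 hh(1)])
    have t: "t > 0" "t \<le> t0" "t < \<rho> - dist y x" using t0 hh t3 unfolding t_def by auto
    have "dq g y h t < ereal (-\<sigma>)"
    proof (cases "t = t0")
      case True then show ?thesis using t0 by simp
    next
      case False then show ?thesis using dq_mono[OF pr cv gyb t(1), of t0 h] t t0 by simp
    qed
    then obtain w where w: "g (y + t *\<^sub>R h) = ereal w" "(w - b) / t < -\<sigma>"
      using dq_lessD[OF pr gyb t(1)] by blast
    have w': "w < b - \<sigma> * t" using w(2) t(1) by (simp add: field_simps)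
    have nh: "norm h = 1" using h(1) by simp
    have dist1: "dist (y + t *\<^sub>R h) x \<le> dist y x + t"
      using dist_triangle[of "y + t *\<^sub>R h" x y] t(1) nh by (simp add: dist_norm)
    have inK: "y + t *\<^sub>R h \<in> cball x \<rho>" using dist1 t by (simp add: dist_commute)
    have "w + s * dist (y + t *\<^sub>R h) x \<le> w + s * (dist y x + t)"
      using dist1 s0 by (simp add: mult_left_mono)
    also have "\<dots> < b + s * dist y x" using w' s t(1)
      by (smt (verit, ccfv_SIG) mult_strict_right_mono distrib_left)
    finally have "\<psi> (y + t *\<^sub>R h) < \<psi> y" by (simp add: \<psi>_def w(1) gyb)
    then show False using y(2)[OF inK] by simp
  qed
  have mem: "\<forall>x. ereal (infdist x ?S) \<le> ereal (1 / \<sigma>) * max 0 (g x)"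
  proof
    fix x show "ereal (infdist x ?S) \<le> ereal (1 / \<sigma>) * max 0 (g x)"
    proof (cases "g x")
      case (real a)
      show ?thesis
      proof (cases "a > 0")
        case True
        then show ?thesis using main[OF real True] sg real by (simp add: max_def)
      next
        case False
        then have "x \<in> ?S" using real by (simp add: sublevel0_def)
        then show ?thesis using real False sg by (simp add: max_def)
      qed
    next
      case PInf then show ?thesis using sg by (simp add: max_def)
    next
      case MInf then show ?thesis using pr unfolding proper_fn_def by auto
    qed
  qed
  show ?thesis unfolding tau_min_def
    by (rule INF_lower2[of "1/\<sigma>"]) (use sg mem in auto)
qed

lemma slope_from_eb:
  fixes g :: "'a::euclidean_space \<Rightarrow> ereal"
  assumes pr: "proper_fn g" and ls: "lsc_fn g" and cv: "convex_fn g"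
    and ne: "sublevel0 g \<noteq> {}" and c: "c > 0" and tm: "tau_min g \<le> ereal c"
    and gy: "g y = ereal a" and a: "a > 0"
  shows "\<exists>h\<in>sphere 0 1. dirderiv g y h \<le> ereal (- 1 / (2 * c))"
proof -
  let ?S = "sublevel0 g"
  have cl: "closed ?S" by (rule closed_sublevel0[OF ls])
  have "tau_min g < ereal (2 * c)" using tm c by (simp add: le_less_trans)
  then obtain \<tau> where \<tau>: "\<tau> > 0" "\<forall>x. ereal (infdist x ?S) \<le> ereal \<tau> * max 0 (g x)" "\<tau> < 2 * c"
    unfolding tau_min_def INF_less_iff by auto
  have "ereal (infdist y ?S) \<le> ereal (\<tau> * a)"
    using \<tau>(2)[rule_format, of y] gy a by (simp add: max_def)
  then have d: "infdist y ?S < 2 * c * a" using \<tau>(3) a by (smt (verit) ereal_less_eq(3) mult_strict_right_mono)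
  define p where "p = closest_point ?S y"
  define r where "r = dist y p"
  have pS: "p \<in> ?S" unfolding p_def using closest_point_in_set[OF cl ne] .
  have yS: "y \<notin> ?S" using gy a by (simp add: sublevel0_def)
  have r0: "r > 0" using pS yS by (auto simp: r_def)
  have rd: "r = infdist y ?S" using infdist_closest[OF cl ne] by (simp add: r_def p_def)
  obtain gp where gp: "g p = ereal gp" "gp \<le> 0"
    using pS pr unfolding sublevel0_def proper_fn_def by (cases "g p") auto
  define h where "h = (1 / r) *\<^sub>R (p - y)"
  have nr: "norm (p - y) = r" by (simp add: r_def dist_norm norm_minus_commute)
  have h: "h \<in> sphere 0 1" using r0 nr by (simp add: h_def)
  have yh: "y + r *\<^sub>R h = p" using r0 by (simp add: h_def)
  have "dirderiv g y h \<le> dq g y h r" by (rule dirderiv_le_dq[OF pr cv gy r0])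
  also have "\<dots> = ereal ((gp - a) / r)" using dq_fin[where g=g and y=y and a=a and t=r and h=h and w=gp] gy r0 yh gp by simp
  also have "\<dots> \<le> ereal (- 1 / (2 * c))"
  proof -
    have "r < 2 * c * a" using d rd by simp
    then have "1 / (2 * c) < a / r" using r0 c by (simp add: field_simps)
    moreover have "(gp - a) / r \<le> - a / r" using gp(2) r0 by (simp add: field_simps mult_nonpos_nonneg)
    ultimately show ?thesis by simp
  qed
  finally show ?thesis using h by blast
qed

lemma out_slope:
  fixes f :: "'a::euclidean_space \<Rightarrow> ereal"
  assumes pr: "proper_fn f" and ls: "lsc_fn f" and cv: "convex_fn f"
    and fr: "frontier (sublevel0 f) \<subseteq> {x. f x = 0}"
    and tau: "\<tau> > 0" and big: "\<forall>p\<in>frontier (sublevel0 f). ereal \<tau> < \<bar>min_dirderiv f p\<bar>"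
    and ne: "sublevel0 f \<noteq> {}" and fy: "f y = ereal a" and a: "a > 0"
  shows "\<exists>h\<in>sphere 0 1. dirderiv f y h \<le> ereal (-\<tau>)"
proof -
  let ?S = "sublevel0 f"
  have cl: "closed ?S" by (rule closed_sublevel0[OF ls])
  have cvS: "convex ?S" by (rule convex_sublevel0[OF pr cv])
  define p where "p = closest_point ?S y"
  define r where "r = dist y p"
  have pS: "p \<in> ?S" unfolding p_def using closest_point_in_set[OF cl ne] .
  have yS: "y \<notin> ?S" using fy a by (simp add: sublevel0_def)
  have r0: "r > 0" using pS yS by (auto simp: r_def)
  have pF: "p \<in> frontier ?S" unfolding p_def by (rule closest_point_frontier[OF cl ne yS])
  have fp: "f p = ereal 0" using fr pF by auto
  have nr: "norm (y - p) = r" by (simp add: r_def dist_norm)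
  have dot: "inner (y - p) (x - p) \<le> 0" if "x \<in> ?S" for x
    using closest_point_dot[OF cvS cl that, of y] by (simp add: p_def)
  have claim: "\<tau> * r \<le> a"
  proof -
    have "ereal \<tau> < min_dirderiv f p \<or> min_dirderiv f p < ereal (-\<tau>)"
      using ereal_abs_gt big pF tau by (meson less_imp_le)
    then show ?thesis
    proof
      assume m: "ereal \<tau> < min_dirderiv f p"
      have "ereal (0 + \<tau> * norm (y - p)) < f y"
        using sharp[OF pr cv fp m] r0 nr by fastforce
      then show ?thesis using fy nr by simp
    next
      assume "min_dirderiv f p < ereal (-\<tau>)"
      then obtain hs where hs: "hs \<in> sphere 0 1" "dirderiv f p hs < ereal (-\<tau>)"
        using mdd_lessD by blast
      obtain t where t: "t > 0" "dq f p hs t < ereal (-\<tau>)"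
        using dirderiv_lessD[OF pr cv fp hs(2)] by blast
      obtain w where w: "f (p + t *\<^sub>R hs) = ereal w" "(w - 0) / t < -\<tau>"
        using dq_lessD[OF pr fp t] by blast
      have wt: "w < - \<tau> * t" using w(2) t(1) by (simp add: field_simps)
      have "\<tau> * s < a" if s: "0 < s" "s < r" for s
      proof -
        define \<mu> where "\<mu> = t / (t + s)"
        have \<mu>: "0 < \<mu>" "\<mu> < 1" using s t by (auto simp: \<mu>_def field_simps)
        have one\<mu>: "1 - \<mu> = s / (t + s)" using s t by (simp add: \<mu>_def field_simps)
        define z where "z = (1 - \<mu>) *\<^sub>R (p + t *\<^sub>R hs) + \<mu> *\<^sub>R y"
        have zp: "z - p = ((1 - \<mu>) * t) *\<^sub>R hs + \<mu> *\<^sub>R (y - p)"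
          by (simp add: z_def algebra_simps)
        have ih: "inner (y - p) hs \<ge> - r"
        proof -
          have "\<bar>inner (y - p) hs\<bar> \<le> norm (y - p) * norm hs" by (rule Cauchy_Schwarz_ineq2)
          then show ?thesis using hs(1) nr by auto
        qed
        have "inner (y - p) (z - p) = (1 - \<mu>) * t * inner (y - p) hs + \<mu> * r^2"
          unfolding zp by (simp add: inner_add_right inner_scaleR_right nr[symmetric] power2_norm_eq_inner)
        also have "\<dots> \<ge> (1 - \<mu>) * t * (-r) + \<mu> * r^2"
          using mult_left_mono[OF ih, of "(1 - \<mu>) * t"] \<mu> t by simp
        finally have "inner (y - p) (z - p) \<ge> r * (\<mu> * r - (1 - \<mu>) * t)"
          by (simp add: algebra_simps power2_eq_square)
        moreover have "\<mu> * r - (1 - \<mu>) * t > 0"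
        proof -
          have ts: "t + s > 0" using s t by simp
          have "\<mu> * r - (1 - \<mu>) * t = (t * r - s * t) / (t + s)"
            unfolding one\<mu> unfolding \<mu>_def by (simp add: diff_divide_distrib)
          also have "\<dots> = t * (r - s) / (t + s)" by (simp add: algebra_simps)
          finally have "\<mu> * r - (1 - \<mu>) * t = t * (r - s) / (t + s)" .
          then show ?thesis using s t by simp
        qed
        ultimately have "inner (y - p) (z - p) > 0" using r0
          by (smt (verit) mult_pos_pos)
        then have "z \<notin> ?S" using dot by force
        then have fz: "0 < f z" by (simp add: sublevel0_def)
        have "\<mu> \<in> {0<..<1}" using \<mu> by simp
        then have "f z \<le> ereal (1 - \<mu>) * f (p + t *\<^sub>R hs) + ereal \<mu> * f y"
          using cv unfolding convex_fn_def z_def by blast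
        then have "0 < ereal ((1 - \<mu>) * w + \<mu> * a)" using fz w(1) fy by (metis order_less_le_trans times_ereal.simps(1) plus_ereal.simps(1))
        then have "0 < (1 - \<mu>) * w + \<mu> * a" by simp
        moreover have "(1 - \<mu>) * w < (1 - \<mu>) * (- \<tau> * t)" using wt \<mu> by (intro mult_strict_left_mono) auto
        ultimately have "(1 - \<mu>) * \<tau> * t < \<mu> * a" by simp
        moreover have "(1 - \<mu>) * \<tau> * t = (\<tau> * s * t) / (t + s)" by (simp add: one\<mu>)
        moreover have "\<mu> * a = (a * t) / (t + s)" by (simp add: \<mu>_def)
        ultimately have "(\<tau> * s * t) / (t + s) < (a * t) / (t + s)" by simp
        then have "\<tau> * s * t < a * t" using s t by (simp add: divide_less_cancel)
        then show ?thesis using t by simp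
      qed
      then show ?thesis
      proof -
        have "\<not> a < \<tau> * r"
        proof
          assume ar: "a < \<tau> * r"
          have "max (a / \<tau>) 0 < r" using ar tau r0 by (simp add: field_simps)
          then obtain s where s0: "max (a / \<tau>) 0 < s" "s < r" using dense by blast
          then have s: "0 < s" "s < r" "a / \<tau> < s" by auto
          then have "a < \<tau> * s" using tau by (simp add: field_simps)
          then show False using \<open>\<And>s. 0 < s \<Longrightarrow> s < r \<Longrightarrow> \<tau> * s < a\<close>[OF s(1,2)] by simp
        qed
        then show ?thesis by simp
      qed
    qed
  qed
  define h where "h = (1 / r) *\<^sub>R (p - y)"
  have nr': "norm (p - y) = r" using nr by (simp add: norm_minus_commute)
  have h: "h \<in> sphere 0 1" using r0 nr' by (simp add: h_def)
  have yh: "y + r *\<^sub>R h = p" using r0 by (simp add: h_def)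
  have "dirderiv f y h \<le> dq f y h r" by (rule dirderiv_le_dq[OF pr cv fy r0])
  also have "\<dots> = ereal ((0 - a) / r)" using dq_fin[where g=f and y=y and a=a and t=r and h=h and w=0] fy r0 yh fp by simp
  also have "\<dots> \<le> ereal (-\<tau>)" using claim r0 by (simp add: field_simps)
  finally show ?thesis using h by blast
qed

lemma stepQ:
  fixes f :: "'a::euclidean_space \<Rightarrow> ereal"
  assumes fr: "frontier (sublevel0 f) \<subseteq> {x. f x = 0}"
    and qc: "\<forall>z xs :: nat \<Rightarrow> 'a.
           (\<forall>k. z k \<in> sublevel0 f - frontier (sublevel0 f)) \<and>
           (\<forall>k. xs k \<in> frontier (sublevel0 f)) \<and>
           ((\<lambda>k. (f (z k) - f (xs k)) / ereal (norm (z k - xs k))) \<longlonglongrightarrow> 0)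
           \<longrightarrow> liminf (\<lambda>k. \<bar>min_dirderiv f (z k)\<bar>) > ereal \<tau>"
  shows "\<exists>e>0. \<forall>y\<in>sublevel0 f - frontier (sublevel0 f). \<forall>xb\<in>frontier (sublevel0 f). \<forall>a.
           f y = ereal a \<longrightarrow> - e * norm (y - xb) < a \<longrightarrow> ereal \<tau> < \<bar>min_dirderiv f y\<bar>"
proof (rule ccontr)
  let ?S = "sublevel0 f" and ?F = "frontier (sublevel0 f)"
  assume "\<not> ?thesis"
  then have "\<forall>k::nat. \<exists>y xb a. y \<in> ?S - ?F \<and> xb \<in> ?F \<and> f y = ereal a \<and>
      - (1 / real (Suc k)) * norm (y - xb) < a \<and> \<not> ereal \<tau> < \<bar>min_dirderiv f y\<bar>"
    by (metis (no_types, lifting) of_nat_0_less_iff zero_less_Suc divide_pos_pos zero_less_one)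
  then obtain z xs A where P: "\<And>k. z k \<in> ?S - ?F" "\<And>k. xs k \<in> ?F" "\<And>k. f (z k) = ereal (A k)"
      "\<And>k. - (1 / real (Suc k)) * norm (z k - xs k) < A k" "\<And>k. \<not> ereal \<tau> < \<bar>min_dirderiv f (z k)\<bar>"
    by metis
  define n where "n = (\<lambda>k. norm (z k - xs k))"
  have n0: "n k > 0" for k using P(1,2)[of k] by (auto simp: n_def)
  have fxs: "f (xs k) = ereal 0" for k using fr P(2)[of k] by auto
  have A0: "A k \<le> 0" for k using P(1,3)[of k] by (simp add: sublevel0_def)
  have ratio: "(f (z k) - f (xs k)) / ereal (norm (z k - xs k)) = ereal (A k / n k)" for k
    using n0[of k] by (simp add: P(3) fxs ereal_q n_def)
  have lo: "- inverse (real (Suc k)) \<le> A k / n k" for k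
  proof -
    have "- (1 / real (Suc k)) * n k < A k" using P(4)[of k] by (simp add: n_def)
    then have "- (1 / real (Suc k)) < A k / n k" using n0[of k] by (simp add: field_simps)
    then show ?thesis by (simp add: inverse_eq_divide)
  qed
  have hi: "A k / n k \<le> 0" for k using A0[of k] n0[of k] by (simp add: divide_nonpos_pos)
  have "(\<lambda>k. A k / n k) \<longlonglongrightarrow> 0"
  proof (rule tendsto_sandwich[of "\<lambda>k. - inverse (real (Suc k))" _ _ "\<lambda>k. 0"])
    show "\<forall>\<^sub>F k in sequentially. - inverse (real (Suc k)) \<le> A k / n k" using lo by simp
    show "\<forall>\<^sub>F k in sequentially. A k / n k \<le> 0" using hi by simp
    show "(\<lambda>k. - inverse (real (Suc k))) \<longlonglongrightarrow> 0"
      using tendsto_minus[OF LIMSEQ_inverse_real_of_nat] by simp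
    show "(\<lambda>k. 0::real) \<longlonglongrightarrow> 0" by simp
  qed
  then have "(\<lambda>k. (f (z k) - f (xs k)) / ereal (norm (z k - xs k))) \<longlonglongrightarrow> 0"
    unfolding ratio zero_ereal_def lim_ereal .
  then have "liminf (\<lambda>k. \<bar>min_dirderiv f (z k)\<bar>) > ereal \<tau>"
    using qc P(1,2) by blast
  then have "eventually (\<lambda>k. \<bar>min_dirderiv f (z k)\<bar> > ereal \<tau>) sequentially"
    by (rule less_LiminfD)
  then show False using P(5) by (simp add: eventually_sequentially)
qed

lemma lip_bound:
  assumes "Lip \<phi> < ereal e"
  shows "\<bar>\<phi> u - \<phi> v\<bar> \<le> e * norm (u - v)"
proof (cases "u = v")
  case True then show ?thesis by simp
next
  case False
  have "ereal (\<bar>\<phi> u - \<phi> v\<bar> / norm (u - v)) \<le> Lip \<phi>"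
    unfolding Lip_def by (rule SUP_upper2[of "(u, v)"]) (use False in auto)
  then have "ereal (\<bar>\<phi> u - \<phi> v\<bar> / norm (u - v)) < ereal e" using assms by (rule le_less_trans)
  then have "\<bar>\<phi> u - \<phi> v\<bar> / norm (u - v) < e" by simp
  then show ?thesis using False by (simp add: field_simps)
qed

lemma one_two:
  fixes f :: "'a::euclidean_space \<Rightarrow> ereal"
  assumes pr: "proper_fn f" and ls: "lsc_fn f" and cv: "convex_fn f"
    and fr: "frontier (sublevel0 f) \<subseteq> {x. f x = 0}"
    and tau: "0 < \<tau>" and inf: "(INF x\<in>frontier (sublevel0 f). \<bar>min_dirderiv f x\<bar>) > ereal \<tau>"
    and qc: "\<forall>z xs :: nat \<Rightarrow> 'a.
           (\<forall>k. z k \<in> sublevel0 f - frontier (sublevel0 f)) \<and>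
           (\<forall>k. xs k \<in> frontier (sublevel0 f)) \<and>
           ((\<lambda>k. (f (z k) - f (xs k)) / ereal (norm (z k - xs k))) \<longlonglongrightarrow> 0)
           \<longrightarrow> liminf (\<lambda>k. \<bar>min_dirderiv f (z k)\<bar>) > ereal \<tau>"
  shows "\<exists>c \<epsilon>::real. 0 < c \<and> 0 < \<epsilon> \<and>
        (\<forall>g \<phi>. proper_fn g \<and> lsc_fn g \<and> convex_fn g \<and>
           frontier (sublevel0 f) \<inter> {x. g x = 0} \<noteq> {} \<and>
           (\<forall>x. f x = g x + ereal (\<phi> x)) \<and> Lip \<phi> < ereal \<epsilon>
           \<longrightarrow> tau_min g \<le> ereal c)"
proof -
  let ?S = "sublevel0 f" and ?F = "frontier (sublevel0 f)"
  obtain e0 where e0: "e0 > 0" and Q: "\<And>y xb a. y \<in> ?S - ?F \<Longrightarrow> xb \<in> ?F \<Longrightarrow>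
           f y = ereal a \<Longrightarrow> - e0 * norm (y - xb) < a \<Longrightarrow> ereal \<tau> < \<bar>min_dirderiv f y\<bar>"
    using stepQ[OF fr qc] by blast
  have big: "\<forall>p\<in>?F. ereal \<tau> < \<bar>min_dirderiv f p\<bar>" using inf by (auto intro: less_INF_D)
  have clS: "closed ?S" by (rule closed_sublevel0[OF ls])
  have FS: "?F \<subseteq> ?S" using clS by (rule frontier_subset_closed)
  define \<epsilon> where "\<epsilon> = min e0 (\<tau> / 2)"
  have eps: "\<epsilon> > 0" "\<epsilon> \<le> e0" "\<epsilon> \<le> \<tau> / 2" using e0 tau by (auto simp: \<epsilon>_def)
  show ?thesis
  proof (intro exI conjI allI impI)
    show "0 < 4 / \<tau>" "0 < \<epsilon>" using tau eps by auto
    fix g \<phi>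
    assume A: "proper_fn g \<and> lsc_fn g \<and> convex_fn g \<and> ?F \<inter> {x. g x = 0} \<noteq> {} \<and>
           (\<forall>x. f x = g x + ereal (\<phi> x)) \<and> Lip \<phi> < ereal \<epsilon>"
    then have gpr: "proper_fn g" and gls: "lsc_fn g" and gcv: "convex_fn g"
      and fg: "\<And>x. f x = g x + ereal (\<phi> x)" and lip: "Lip \<phi> < ereal \<epsilon>" by auto
    obtain xb where xb: "xb \<in> ?F" "g xb = 0" using A by auto
    have fxb: "f xb = ereal 0" using fr xb(1) by auto
    have \<phi>xb: "\<phi> xb = 0" using fg[of xb] fxb xb(2) by simp
    have L: "\<And>u v. \<bar>\<phi> u - \<phi> v\<bar> \<le> \<epsilon> * norm (u - v)" using lip_bound[OF lip] .
    have neS: "?S \<noteq> {}" using xb(1) FS by auto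
    have neg: "sublevel0 g \<noteq> {}" using xb(2) unfolding sublevel0_def by (metis empty_iff mem_Collect_eq order_refl)
    have gfin: "g x = ereal b \<Longrightarrow> f x = ereal (b + \<phi> x)" for x b using fg[of x] by simp
    have slope: "\<exists>h\<in>sphere 0 1. dirderiv g y h < ereal (- (\<tau> / 4))"
      if y: "0 < g y" "g y < \<infinity>" for y
    proof -
      obtain b where b: "g y = ereal b" "b > 0" using y by (cases "g y") auto
      define a where "a = b + \<phi> y"
      have fy: "f y = ereal a" using gfin[OF b(1)] by (simp add: a_def)
      have yxb: "y \<noteq> xb" using b xb(2) by auto
      have nyx: "norm (y - xb) > 0" using yxb by simp
      have alow: "- \<epsilon> * norm (y - xb) < a"
      proof -
        have "\<phi> xb - \<phi> y \<le> \<epsilon> * norm (y - xb)" using L[of y xb] by linarith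
        then show ?thesis using b(2) \<phi>xb by (simp add: a_def)
      qed
      have "\<exists>h\<in>sphere 0 1. dirderiv f y h \<le> ereal (-\<tau>)"
      proof (cases "a > 0")
        case True
        show ?thesis by (rule out_slope[OF pr ls cv fr tau big neS fy True])
      next
        case False
        then have yS: "y \<in> ?S" using fy by (simp add: sublevel0_def)
        have ab: "ereal \<tau> < \<bar>min_dirderiv f y\<bar>"
        proof (cases "y \<in> ?F")
          case True then show ?thesis using big by auto
        next
          case False
          have "- e0 * norm (y - xb) \<le> - \<epsilon> * norm (y - xb)" using eps nyx by simp
          then show ?thesis using Q[of y xb a] False yS xb(1) fy alow by simp
        qed
        have "ereal \<tau> < min_dirderiv f y \<or> min_dirderiv f y < ereal (-\<tau>)"
          using ereal_abs_gt[OF ab] tau by simp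
        then show ?thesis
        proof
          assume m: "ereal \<tau> < min_dirderiv f y"
          have "ereal (a + \<tau> * norm (xb - y)) < f xb" using sharp[OF pr cv fy m] yxb by auto
          then have "a + \<tau> * norm (y - xb) < 0" using fxb by (simp add: norm_minus_commute)
          moreover have "\<epsilon> * norm (y - xb) \<le> \<tau> * norm (y - xb)" using eps tau nyx by simp
          ultimately show ?thesis using alow by simp
        next
          assume "min_dirderiv f y < ereal (-\<tau>)"
          then show ?thesis using mdd_lessD by (meson less_imp_le)
        qed
      qed
      then obtain h where h: "h \<in> sphere 0 1" "dirderiv f y h \<le> ereal (-\<tau>)" by blast
      have "ereal (-\<tau>) < ereal (- (3 * \<tau> / 4))" using tau by simp
      then have "dirderiv f y h < ereal (- (3 * \<tau> / 4))" using h(2) by (rule le_less_trans[rotated])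
      then obtain t where t: "t > 0" "dq f y h t < ereal (- (3 * \<tau> / 4))"
        using dirderiv_lessD[OF pr cv fy] by blast
      obtain w where w: "f (y + t *\<^sub>R h) = ereal w" "(w - a) / t < - (3 * \<tau> / 4)"
        using dq_lessD[OF pr fy t(1) t(2)] by blast
      define y' where "y' = y + t *\<^sub>R h"
      have gy': "g y' = ereal (w - \<phi> y')"
        using fg[of y'] w(1) by (cases "g y'") (auto simp: y'_def)
      have nh: "norm h = 1" using h(1) by simp
      have "\<phi> y - \<phi> y' \<le> \<epsilon> * t"
        using L[of y' y] t(1) nh by (simp add: y'_def abs_le_iff)
      then have q: "(\<phi> y - \<phi> y') / t \<le> \<epsilon>" using t(1) by (simp add: divide_le_eq mult.commute)
      have "((w - \<phi> y') - b) / t = (w - a) / t + (\<phi> y - \<phi> y') / t"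
        by (simp add: a_def diff_divide_distrib add_divide_distrib)
      then have "((w - \<phi> y') - b) / t \<le> (w - a) / t + \<epsilon>" using q by simp
      also have "\<dots> < - (\<tau> / 4)" using w(2) eps by simp
      finally have lt: "((w - \<phi> y') - b) / t < - (\<tau> / 4)" .
      have "dirderiv g y h \<le> dq g y h t" by (rule dirderiv_le_dq[OF gpr gcv b(1) t(1)])
      also have "\<dots> = ereal (((w - \<phi> y') - b) / t)"
        using dq_fin[where g=g and y=y and a=b and t=t and h=h and w="w - \<phi> y'"] b(1) t(1) gy'
        by (simp add: y'_def)
      finally have "dirderiv g y h \<le> ereal (((w - \<phi> y') - b) / t)" .
      moreover have "ereal (((w - \<phi> y') - b) / t) < ereal (- (\<tau> / 4))" using lt by simp
      ultimately show ?thesis using h(1) by (meson le_less_trans)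
    qed
    have "tau_min g \<le> ereal (1 / (\<tau> / 4))"
      by (rule eb_from_slope[OF gpr gls gcv neg]) (use tau slope in auto)
    then show "tau_min g \<le> ereal (4 / \<tau>)" by simp
  qed
qed

lemma pert_props:
  fixes f :: "'a::euclidean_space \<Rightarrow> ereal"
  assumes pr: "proper_fn f" and ls: "lsc_fn f" and cv: "convex_fn f"
  shows "proper_fn (\<lambda>x. f x + ereal (e * (u \<bullet> (x - xb))))"
    "lsc_fn (\<lambda>x. f x + ereal (e * (u \<bullet> (x - xb))))"
    "convex_fn (\<lambda>x. f x + ereal (e * (u \<bullet> (x - xb))))"
proof -
  show "proper_fn (\<lambda>x. f x + ereal (e * (u \<bullet> (x - xb))))" by (rule proper_pert[OF pr])
  show "lsc_fn (\<lambda>x. f x + ereal (e * (u \<bullet> (x - xb))))"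
    by (rule lsc_pert[OF pr ls]) (intro continuous_intros)
  show "convex_fn (\<lambda>x. f x + ereal (e * (u \<bullet> (x - xb))))"
  proof (rule convex_pert[OF pr cv])
    fix x y :: 'a and t :: real
    have "(1 - t) *\<^sub>R x + t *\<^sub>R y - xb = (1 - t) *\<^sub>R (x - xb) + t *\<^sub>R (y - xb)"
      by (simp add: algebra_simps)
    then show "e * (u \<bullet> ((1 - t) *\<^sub>R x + t *\<^sub>R y - xb)) = (1 - t) * (e * (u \<bullet> (x - xb))) + t * (e * (u \<bullet> (y - xb)))"
      by (simp add: inner_add_right algebra_simps)
  qed
qed

lemma cone_dist:
  fixes h0 v :: "'a::real_inner"
  assumes h0: "norm h0 = 1" and t: "t > 0" and c: "h0 \<bullet> v \<le> norm v / 2"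
  shows "t / 3 \<le> norm (t *\<^sub>R h0 - v)"
proof -
  have "h0 \<bullet> (t *\<^sub>R h0 - v) \<le> norm h0 * norm (t *\<^sub>R h0 - v)" by (rule norm_cauchy_schwarz)
  then have n1: "t - h0 \<bullet> v \<le> norm (t *\<^sub>R h0 - v)"
    using h0 by (simp add: inner_diff_right power2_norm_eq_inner[symmetric])
  have n2: "norm v - t \<le> norm (t *\<^sub>R h0 - v)"
    using norm_triangle_ineq2[of v "t *\<^sub>R h0"] h0 t by (simp add: norm_minus_commute)
  show ?thesis
  proof (cases "norm v \<le> 4 * t / 3")
    case True then show ?thesis using n1 c by linarith
  next
    case False then show ?thesis using n2 by linarith
  qed
qed

lemma two_three:
  fixes f :: "'a::euclidean_space \<Rightarrow> ereal"
  assumes pr: "proper_fn f" and ls: "lsc_fn f" and cv: "convex_fn f"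
    and fr: "frontier (sublevel0 f) \<subseteq> {x. f x = 0}"
    and II: "\<exists>c \<epsilon>::real. 0 < c \<and> 0 < \<epsilon> \<and>
        (\<forall>g \<phi>. proper_fn g \<and> lsc_fn g \<and> convex_fn g \<and>
           frontier (sublevel0 f) \<inter> {x. g x = 0} \<noteq> {} \<and>
           (\<forall>x. f x = g x + ereal (\<phi> x)) \<and> Lip \<phi> < ereal \<epsilon>
           \<longrightarrow> tau_min g \<le> ereal c)"
  shows "\<exists>c \<epsilon>::real. 0 < c \<and> 0 < \<epsilon> \<and>
        (\<forall>xbar\<in>frontier (sublevel0 f). \<forall>u::'a. norm u \<le> 1 \<longrightarrow>
           tau_min (\<lambda>x. f x + ereal (\<epsilon> * (u \<bullet> (x - xbar)))) \<le> ereal c)"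
proof -
  obtain c \<epsilon> where c0: "0 < c \<and> 0 < \<epsilon> \<and> (\<forall>g \<phi>. proper_fn g \<and> lsc_fn g \<and> convex_fn g \<and>
           frontier (sublevel0 f) \<inter> {x. g x = 0} \<noteq> {} \<and>
           (\<forall>x. f x = g x + ereal (\<phi> x)) \<and> Lip \<phi> < ereal \<epsilon>
           \<longrightarrow> tau_min g \<le> ereal c)"
    using II by (elim exE) (rule that)
  have c: "0 < c" "0 < \<epsilon>" using c0 by simp_all
  have H: "\<And>g \<phi>. proper_fn g \<and> lsc_fn g \<and> convex_fn g \<and>
           frontier (sublevel0 f) \<inter> {x. g x = 0} \<noteq> {} \<and>
           (\<forall>x. f x = g x + ereal (\<phi> x)) \<and> Lip \<phi> < ereal \<epsilon>
           \<Longrightarrow> tau_min g \<le> ereal c" by (rule c0[THEN conjunct2, THEN conjunct2, rule_format])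
  show ?thesis
  proof (intro exI conjI ballI allI impI)
    show "0 < c" "0 < \<epsilon> / 2" using c by auto
    fix xb u assume xb: "xb \<in> frontier (sublevel0 f)" and u: "norm (u::'a) \<le> 1"
    define g where "g = (\<lambda>x. f x + ereal (\<epsilon> / 2 * (u \<bullet> (x - xb))))"
    define \<phi> where "\<phi> = (\<lambda>x. - (\<epsilon> / 2 * (u \<bullet> (x - xb))))"
    have gp: "proper_fn g" "lsc_fn g" "convex_fn g" unfolding g_def by (rule pert_props[OF pr ls cv])+
    have "g xb = 0" using fr xb by (auto simp: g_def)
    then have ne: "frontier (sublevel0 f) \<inter> {x. g x = 0} \<noteq> {}" using xb by auto
    have fg: "\<forall>x. f x = g x + ereal (\<phi> x)"
    proof
      fix x show "f x = g x + ereal (\<phi> x)"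
        using pr unfolding proper_fn_def by (cases "f x") (simp_all add: g_def \<phi>_def)
    qed
    have "Lip \<phi> \<le> ereal (\<epsilon> / 2)"
      unfolding Lip_def
    proof (rule SUP_least)
      fix p assume "p \<in> {(u, v). u \<noteq> (v::'a)}"
      then obtain a b where p: "p = (a, b)" "a \<noteq> b" by auto
      have "\<bar>\<phi> a - \<phi> b\<bar> = \<epsilon> / 2 * \<bar>u \<bullet> (a - b)\<bar>"
      proof -
        have "\<phi> a - \<phi> b = - (\<epsilon> / 2 * (u \<bullet> (a - b)))"
          unfolding \<phi>_def inner_diff_right by (simp add: right_diff_distrib)
        then show ?thesis using c by (simp add: abs_mult)
      qed
      also have "\<dots> \<le> \<epsilon> / 2 * (norm u * norm (a - b))"
        using c Cauchy_Schwarz_ineq2[of u "a - b"] by (simp add: mult_left_mono)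
      also have "\<dots> \<le> \<epsilon> / 2 * norm (a - b)"
        using c u mult_left_le_one_le[of "norm (a - b)" "norm u"] by (simp add: mult_left_mono)
      finally have "\<bar>\<phi> a - \<phi> b\<bar> / norm (a - b) \<le> \<epsilon> / 2" using p(2) by (simp add: divide_le_eq)
      then show "ereal (\<bar>\<phi> (fst p) - \<phi> (snd p)\<bar> / norm (fst p - snd p)) \<le> ereal (\<epsilon> / 2)"
        using p by simp
    qed
    also have "\<dots> < ereal \<epsilon>" using c by simp
    finally have "Lip \<phi> < ereal \<epsilon>" .
    then have "tau_min g \<le> ereal c" using gp ne fg by (intro H conjI)
    then show "tau_min (\<lambda>x. f x + ereal (\<epsilon> / 2 * (u \<bullet> (x - xb)))) \<le> ereal c" by (simp add: g_def)
  qed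
qed

lemma ereal_abs_from_neg:
  fixes m :: ereal
  assumes "m < ereal (- b)" "b \<ge> 0"
  shows "ereal b < \<bar>m\<bar>"
  using assms by (cases m) auto

lemma three_one:
  fixes f :: "'a::euclidean_space \<Rightarrow> ereal"
  assumes pr: "proper_fn f" and ls: "lsc_fn f" and cv: "convex_fn f"
    and fr: "frontier (sublevel0 f) \<subseteq> {x. f x = 0}"
    and III: "\<exists>c \<epsilon>::real. 0 < c \<and> 0 < \<epsilon> \<and>
        (\<forall>xbar\<in>frontier (sublevel0 f). \<forall>u::'a. norm u \<le> 1 \<longrightarrow>
           tau_min (\<lambda>x. f x + ereal (\<epsilon> * (u \<bullet> (x - xbar)))) \<le> ereal c)"
  shows "\<exists>\<tau>::real. 0 < \<tau> \<and>
        (INF x\<in>frontier (sublevel0 f). \<bar>min_dirderiv f x\<bar>) > ereal \<tau> \<and>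
        (\<forall>z xs :: nat \<Rightarrow> 'a.
           (\<forall>k. z k \<in> sublevel0 f - frontier (sublevel0 f)) \<and>
           (\<forall>k. xs k \<in> frontier (sublevel0 f)) \<and>
           ((\<lambda>k. (f (z k) - f (xs k)) / ereal (norm (z k - xs k))) \<longlonglongrightarrow> 0)
           \<longrightarrow> liminf (\<lambda>k. \<bar>min_dirderiv f (z k)\<bar>) > ereal \<tau>)"
proof -
  let ?S = "sublevel0 f" and ?F = "frontier (sublevel0 f)"
  obtain c \<epsilon> where c0: "0 < c \<and> 0 < \<epsilon> \<and> (\<forall>xbar\<in>frontier (sublevel0 f). \<forall>u::'a. norm u \<le> 1 \<longrightarrow>
           tau_min (\<lambda>x. f x + ereal (\<epsilon> * (u \<bullet> (x - xbar)))) \<le> ereal c)"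
    using III by (elim exE) (rule that)
  have c: "0 < c" "0 < \<epsilon>" using c0 by simp_all
  have H: "\<And>xb u. xb \<in> ?F \<Longrightarrow> norm u \<le> 1 \<Longrightarrow>
      tau_min (\<lambda>x. f x + ereal (\<epsilon> * (u \<bullet> (x - xb)))) \<le> ereal c"
    by (rule c0[THEN conjunct2, THEN conjunct2, rule_format])
  have clS: "closed ?S" by (rule closed_sublevel0[OF ls])
  have FS: "?F \<subseteq> ?S" using clS by (rule frontier_subset_closed)
  define \<kappa> where "\<kappa> = min (\<epsilon> / 2) (1 / (36 * c))"
  have \<kappa>: "\<kappa> > 0" "\<kappa> \<le> \<epsilon> / 2" "\<kappa> \<le> 1 / (36 * c)" using c by (auto simp: \<kappa>_def)
  have partA: "ereal \<kappa> \<le> \<bar>min_dirderiv f xb\<bar>" if xb: "xb \<in> ?F" for xb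
  proof (rule ccontr)
    assume "\<not> ereal \<kappa> \<le> \<bar>min_dirderiv f xb\<bar>"
    then have am: "\<bar>min_dirderiv f xb\<bar> < ereal \<kappa>" by simp
    have mlo: "ereal (-\<kappa>) < min_dirderiv f xb" using am by (cases "min_dirderiv f xb") auto
    have mhi: "min_dirderiv f xb < ereal \<kappa>" using am by (cases "min_dirderiv f xb") auto
    have fxb: "f xb = ereal 0" using fr xb by auto
    obtain h0 where h0: "h0 \<in> sphere 0 1" "dirderiv f xb h0 < ereal \<kappa>" using mdd_lessD[OF mhi] by blast
    obtain t where t: "t > 0" "dq f xb h0 t < ereal \<kappa>" using dirderiv_lessD[OF pr cv fxb h0(2)] by blast
    obtain w where w: "f (xb + t *\<^sub>R h0) = ereal w" "(w - 0) / t < \<kappa>" using dq_lessD[OF pr fxb t] by blast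
    have wt: "w < \<kappa> * t" using w(2) t(1) by (simp add: field_simps)
    have nh0: "norm h0 = 1" using h0(1) by simp
    define u where "u = (2 * \<kappa> / \<epsilon>) *\<^sub>R h0"
    have nu: "norm u \<le> 1" using \<kappa> c nh0 by (simp add: u_def field_simps)
    define g where "g = (\<lambda>x. f x + ereal (\<epsilon> * (u \<bullet> (x - xb))))"
    have gP: "\<epsilon> * (u \<bullet> v) = 2 * \<kappa> * (h0 \<bullet> v)" for v using c by (simp add: u_def)
    have gf: "g x = f x + ereal (2 * \<kappa> * (h0 \<bullet> (x - xb)))" for x by (simp add: g_def gP)
    have tm: "tau_min g \<le> ereal c" unfolding g_def by (rule H[OF xb nu])
    have "tau_min g < ereal (2 * c)" using tm c by (simp add: le_less_trans)
    then obtain \<tau> where \<tau>: "\<tau> > 0" "\<forall>x. ereal (infdist x (sublevel0 g)) \<le> ereal \<tau> * max 0 (g x)" "\<tau> < 2 * c"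
      unfolding tau_min_def INF_less_iff by auto
    define y where "y = xb + t *\<^sub>R h0"
    have gy: "g y = ereal (w + 2 * \<kappa> * t)" using w(1) nh0
      by (simp add: gf y_def inner_scaleR_right power2_norm_eq_inner[symmetric])
    have "ereal (infdist y (sublevel0 g)) \<le> ereal (\<tau> * max 0 (w + 2 * \<kappa> * t))"
      using \<tau>(2)[rule_format, of y] gy by (cases "0 \<le> w + 2 * \<kappa> * t") (simp_all add: max_def)
    then have up1: "infdist y (sublevel0 g) \<le> \<tau> * max 0 (w + 2 * \<kappa> * t)" by simp
    have "max 0 (w + 2 * \<kappa> * t) \<le> 3 * \<kappa> * t" using wt \<kappa> t by auto
    then have "\<tau> * max 0 (w + 2 * \<kappa> * t) \<le> 2 * c * (3 * \<kappa> * t)"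
      using \<tau> by (intro mult_mono) auto
    with up1 have up: "infdist y (sublevel0 g) \<le> 6 * c * \<kappa> * t" by simp
    have gxb: "g xb = 0" using fxb by (simp add: gf)
    then have neg: "sublevel0 g \<noteq> {}" unfolding sublevel0_def by (metis empty_iff mem_Collect_eq order_refl)
    have lowz: "t / 3 \<le> dist y z" if z: "z \<in> sublevel0 g" for z
    proof (cases "z = xb")
      case True then show ?thesis using t nh0 by (simp add: y_def dist_norm)
    next
      case False
      define v where "v = z - xb"
      define n where "n = norm v"
      have n0: "n > 0" using False by (simp add: n_def v_def)
      define d where "d = (1 / n) *\<^sub>R v"
      have d: "d \<in> sphere 0 1" using n0 by (simp add: d_def n_def)
      have xz: "xb + n *\<^sub>R d = z" using n0 by (simp add: d_def v_def)
      have "ereal (-\<kappa>) < dq f xb d n"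
        using mlo mdd_le[OF d, of f xb] dirderiv_le_dq[OF pr cv fxb n0, of d] by (meson less_le_trans)
      from dq_gtD[OF pr fxb n0 this] xz
      have "f z = \<infinity> \<or> (\<exists>wz. f z = ereal wz \<and> -\<kappa> < (wz - 0) / n)" by simp
      moreover have "g z \<le> 0" using z by (simp add: sublevel0_def)
      ultimately obtain wz where wz: "f z = ereal wz" "-\<kappa> < wz / n"
        by (auto simp: gf)
      have wz': "-\<kappa> * n < wz" using wz(2) n0 by (simp add: field_simps)
      have "ereal (wz + 2 * \<kappa> * (h0 \<bullet> v)) \<le> 0" using \<open>g z \<le> 0\<close> wz(1) by (simp add: gf v_def)
      then have "2 * \<kappa> * (h0 \<bullet> v) < \<kappa> * n" using wz' by simp
      then have "h0 \<bullet> v \<le> norm v / 2" using \<kappa> by (simp add: n_def field_simps)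
      then have "t / 3 \<le> norm (t *\<^sub>R h0 - v)" by (rule cone_dist[OF nh0 t(1)])
      moreover have "y - z = t *\<^sub>R h0 - v" by (simp add: y_def v_def)
      ultimately show ?thesis by (simp add: dist_norm)
    qed
    have "t / 3 \<le> infdist y (sublevel0 g)"
      unfolding infdist_notempty[OF neg] by (rule cINF_greatest[OF neg lowz])
    with up have "t / 3 \<le> 6 * c * \<kappa> * t" by simp
    moreover have "6 * c * \<kappa> \<le> 1 / 6" using \<kappa>(3) c by (simp add: field_simps)
    moreover have "6 * c * \<kappa> * t \<le> 1 / 6 * t" using t(1) \<open>6 * c * \<kappa> \<le> 1 / 6\<close> by (intro mult_right_mono) auto
    ultimately have "t / 3 \<le> t / 6" by simp
    then show False using t by simp
  qed
  define \<tau> where "\<tau> = \<kappa> / 2"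
  have inf: "(INF x\<in>?F. \<bar>min_dirderiv f x\<bar>) > ereal \<tau>"
  proof -
    have k1: "ereal \<kappa> \<le> (INF x\<in>?F. \<bar>min_dirderiv f x\<bar>)" by (rule INF_greatest) (rule partA)
    have k2: "ereal \<tau> < ereal \<kappa>" using \<kappa> by (simp add: \<tau>_def)
    show ?thesis using k2 k1 by (rule less_le_trans)
  qed
  define a0 where "a0 = min \<epsilon> (1 / (8 * c))"
  have a0: "a0 > 0" "a0 \<le> \<epsilon>" "a0 \<le> 1 / (8 * c)" using c by (auto simp: a0_def)
  have claimB: "ereal (1 / (4 * c)) < \<bar>min_dirderiv f y\<bar>"
    if y: "y \<in> ?S - ?F" and xb: "xb \<in> ?F"
      and rt: "ereal (- a0) < (f y - f xb) / ereal (norm (y - xb))" for y xb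
  proof -
    have fxb: "f xb = ereal 0" using fr xb by auto
    obtain A where A: "f y = ereal A" using y pr unfolding sublevel0_def proper_fn_def by (cases "f y") auto
    define n where "n = norm (y - xb)"
    have n0: "n > 0" using y xb by (auto simp: n_def)
    have "(f y - f xb) / ereal (norm (y - xb)) = ereal (A / n)"
      using n0 by (simp add: A fxb ereal_q n_def)
    then have "- a0 < A / n" using rt by simp
    then have An: "A + a0 * n > 0" using n0 by (simp add: field_simps)
    define e where "e = (1 / n) *\<^sub>R (y - xb)"
    define u where "u = (a0 / \<epsilon>) *\<^sub>R e"
    have ne: "norm e = 1" using n0 by (simp add: e_def n_def)
    have nu: "norm u \<le> 1" using a0 c ne by (simp add: u_def field_simps)
    define P where "P = (\<lambda>x. \<epsilon> * (u \<bullet> (x - xb)))"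
    define g where "g = (\<lambda>x. f x + ereal (P x))"
    have gp: "proper_fn g" "lsc_fn g" "convex_fn g" unfolding g_def P_def by (rule pert_props[OF pr ls cv])+
    have tm: "tau_min g \<le> ereal c" unfolding g_def P_def by (rule H[OF xb nu])
    have ey: "e \<bullet> (y - xb) = n"
      using n0 by (simp add: e_def n_def inner_scaleR_left power2_norm_eq_inner[symmetric] power2_eq_square)
    have Py: "P y = a0 * n" using c by (simp add: P_def u_def ey)
    have gy: "g y = ereal (A + a0 * n)" by (simp add: g_def A Py)
    have gxb: "g xb = 0" using fxb by (simp add: g_def P_def)
    then have neg: "sublevel0 g \<noteq> {}" unfolding sublevel0_def by (metis empty_iff mem_Collect_eq order_refl)
    obtain h where h: "h \<in> sphere 0 1" "dirderiv g y h \<le> ereal (- 1 / (2 * c))"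
      using slope_from_eb[OF gp neg c(1) tm gy An] by blast
    have "ereal (- 1 / (2 * c)) < ereal (- 3 / (8 * c))" using c by (simp add: field_simps)
    then have "dirderiv g y h < ereal (- 3 / (8 * c))" using h(2) by (rule le_less_trans[rotated])
    then obtain t where t: "t > 0" "dq g y h t < ereal (- 3 / (8 * c))"
      using dirderiv_lessD[OF gp(1) gp(3) gy] by blast
    obtain wg where wg: "g (y + t *\<^sub>R h) = ereal wg" "(wg - (A + a0 * n)) / t < - 3 / (8 * c)"
      using dq_lessD[OF gp(1) gy t] by blast
    define y' where "y' = y + t *\<^sub>R h"
    have fy': "f y' = ereal (wg - P y')"
      using wg(1) unfolding g_def y'_def[symmetric] by (cases "f y'") auto
    have nh: "norm h = 1" using h(1) by simp
    have "P y' - P y = \<epsilon> * t * (u \<bullet> h)"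
      by (simp add: P_def y'_def inner_diff_right inner_add_right algebra_simps)
    moreover have "\<bar>u \<bullet> h\<bar> \<le> a0 / \<epsilon>"
      using Cauchy_Schwarz_ineq2[of u h] nh a0 c ne by (simp add: u_def)
    ultimately have PP: "P y' - P y = \<epsilon> * t * (u \<bullet> h)" and uh: "- (a0 / \<epsilon>) \<le> u \<bullet> h" by auto
    have "\<epsilon> * t * (- (a0 / \<epsilon>)) \<le> \<epsilon> * t * (u \<bullet> h)"
      using uh c t by (intro mult_left_mono) auto
    moreover have "\<epsilon> * t * (- (a0 / \<epsilon>)) = - (t * a0)" using c by simp
    ultimately have "P y - P y' \<le> t * a0" using PP by linarith
    then have q: "(P y - P y') / t \<le> a0" using t by (simp add: divide_le_eq mult.commute)
    have "((wg - P y') - A) / t = (wg - (A + a0 * n)) / t + (P y - P y') / t"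
      by (simp add: Py diff_divide_distrib add_divide_distrib)
    also have "\<dots> < - 3 / (8 * c) + a0" using wg(2) q by simp
    also have "\<dots> \<le> - 1 / (4 * c)" using a0 c by (simp add: field_simps)
    finally have lt: "((wg - P y') - A) / t < - 1 / (4 * c)" .
    have "min_dirderiv f y \<le> dirderiv f y h" by (rule mdd_le[OF h(1)])
    also have "\<dots> \<le> dq f y h t" by (rule dirderiv_le_dq[OF pr cv A t(1)])
    also have "\<dots> = ereal (((wg - P y') - A) / t)"
      using dq_fin[where g=f and y=y and a=A and t=t and h=h and w="wg - P y'"] A t(1) fy'
      by (simp add: y'_def)
    finally have m1: "min_dirderiv f y \<le> ereal (((wg - P y') - A) / t)" .
    have m2: "ereal (((wg - P y') - A) / t) < ereal (- (1 / (4 * c)))" using lt by simp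
    have "min_dirderiv f y < ereal (- (1 / (4 * c)))" using m1 m2 by (rule le_less_trans)
    then show ?thesis by (rule ereal_abs_from_neg) (use c in simp)
  qed
  show ?thesis
  proof (intro exI conjI allI impI)
    show "0 < \<tau>" using \<kappa> by (simp add: \<tau>_def)
    show "(INF x\<in>?F. \<bar>min_dirderiv f x\<bar>) > ereal \<tau>" by (rule inf)
    fix z xs :: "nat \<Rightarrow> 'a"
    assume A: "(\<forall>k. z k \<in> ?S - ?F) \<and> (\<forall>k. xs k \<in> ?F) \<and>
           ((\<lambda>k. (f (z k) - f (xs k)) / ereal (norm (z k - xs k))) \<longlonglongrightarrow> 0)"
    have "eventually (\<lambda>k. ereal (- a0) < (f (z k) - f (xs k)) / ereal (norm (z k - xs k))) sequentially"
      using A a0 by (intro order_tendstoD(1)[of _ 0]) auto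
    then have ev: "eventually (\<lambda>k. ereal (1 / (4 * c)) < \<bar>min_dirderiv f (z k)\<bar>) sequentially"
      by (rule eventually_mono) (use A claimB in blast)
    have L1: "ereal (1 / (4 * c)) \<le> liminf (\<lambda>k. \<bar>min_dirderiv f (z k)\<bar>)"
      unfolding le_Liminf_iff
    proof (intro allI impI)
      fix y assume yl: "y < ereal (1 / (4 * c))"
      show "eventually (\<lambda>k. y < \<bar>min_dirderiv f (z k)\<bar>) sequentially"
        using ev by (rule eventually_mono) (rule less_trans[OF yl])
    qed
    have L2: "ereal \<tau> < ereal (1 / (4 * c))"
    proof -
      have "\<tau> \<le> 1 / (72 * c)" using \<kappa>(3) by (simp add: \<tau>_def)
      also have "\<dots> < 1 / (4 * c)" using c by (simp add: field_simps)
      finally show ?thesis by simp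
    qed
    show "liminf (\<lambda>k. \<bar>min_dirderiv f (z k)\<bar>) > ereal \<tau>" using L2 L1 by (rule less_le_trans)
  qed
qed

theorem theorem9:
  fixes f :: "'a::euclidean_space \<Rightarrow> ereal"
  assumes "proper_fn f" and "lsc_fn f" and "convex_fn f"
    and "frontier (sublevel0 f) \<subseteq> {x. f x = 0}"
  shows
   "((\<exists>\<tau>::real. 0 < \<tau> \<and>
        (INF x\<in>frontier (sublevel0 f). \<bar>min_dirderiv f x\<bar>) > ereal \<tau> \<and>
        (\<forall>z xs :: nat \<Rightarrow> 'a.
           (\<forall>k. z k \<in> sublevel0 f - frontier (sublevel0 f)) \<and>
           (\<forall>k. xs k \<in> frontier (sublevel0 f)) \<and>
           ((\<lambda>k. (f (z k) - f (xs k)) / ereal (norm (z k - xs k))) \<longlonglongrightarrow> 0)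
           \<longrightarrow> liminf (\<lambda>k. \<bar>min_dirderiv f (z k)\<bar>) > ereal \<tau>))
     \<longleftrightarrow>
     (\<exists>c \<epsilon>::real. 0 < c \<and> 0 < \<epsilon> \<and>
        (\<forall>g \<phi>. proper_fn g \<and> lsc_fn g \<and> convex_fn g \<and>
           frontier (sublevel0 f) \<inter> {x. g x = 0} \<noteq> {} \<and>
           (\<forall>x. f x = g x + ereal (\<phi> x)) \<and> Lip \<phi> < ereal \<epsilon>
           \<longrightarrow> tau_min g \<le> ereal c)))
    \<and>
    ((\<exists>c \<epsilon>::real. 0 < c \<and> 0 < \<epsilon> \<and>
        (\<forall>g \<phi>. proper_fn g \<and> lsc_fn g \<and> convex_fn g \<and>
           frontier (sublevel0 f) \<inter> {x. g x = 0} \<noteq> {} \<and>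
           (\<forall>x. f x = g x + ereal (\<phi> x)) \<and> Lip \<phi> < ereal \<epsilon>
           \<longrightarrow> tau_min g \<le> ereal c))
     \<longleftrightarrow>
     (\<exists>c \<epsilon>::real. 0 < c \<and> 0 < \<epsilon> \<and>
        (\<forall>xbar\<in>frontier (sublevel0 f). \<forall>u::'a. norm u \<le> 1 \<longrightarrow>
           tau_min (\<lambda>x. f x + ereal (\<epsilon> * (u \<bullet> (x - xbar)))) \<le> ereal c)))"
  proof -
  note A = assms
  let ?I = "\<exists>\<tau>::real. 0 < \<tau> \<and>
        (INF x\<in>frontier (sublevel0 f). \<bar>min_dirderiv f x\<bar>) > ereal \<tau> \<and>
        (\<forall>z xs :: nat \<Rightarrow> 'a.
           (\<forall>k. z k \<in> sublevel0 f - frontier (sublevel0 f)) \<and>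
           (\<forall>k. xs k \<in> frontier (sublevel0 f)) \<and>
           ((\<lambda>k. (f (z k) - f (xs k)) / ereal (norm (z k - xs k))) \<longlonglongrightarrow> 0)
           \<longrightarrow> liminf (\<lambda>k. \<bar>min_dirderiv f (z k)\<bar>) > ereal \<tau>)"
  let ?II = "\<exists>c \<epsilon>::real. 0 < c \<and> 0 < \<epsilon> \<and>
        (\<forall>g \<phi>. proper_fn g \<and> lsc_fn g \<and> convex_fn g \<and>
           frontier (sublevel0 f) \<inter> {x. g x = 0} \<noteq> {} \<and>
           (\<forall>x. f x = g x + ereal (\<phi> x)) \<and> Lip \<phi> < ereal \<epsilon>
           \<longrightarrow> tau_min g \<le> ereal c)"
  let ?III = "\<exists>c \<epsilon>::real. 0 < c \<and> 0 < \<epsilon> \<and>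
        (\<forall>xbar\<in>frontier (sublevel0 f). \<forall>u::'a. norm u \<le> 1 \<longrightarrow>
           tau_min (\<lambda>x. f x + ereal (\<epsilon> * (u \<bullet> (x - xbar)))) \<le> ereal c)"
  have i12: "?II" if "?I"
  proof -
    from that obtain \<tau> where t: "0 < \<tau> \<and>
        (INF x\<in>frontier (sublevel0 f). \<bar>min_dirderiv f x\<bar>) > ereal \<tau> \<and>
        (\<forall>z xs :: nat \<Rightarrow> 'a.
           (\<forall>k. z k \<in> sublevel0 f - frontier (sublevel0 f)) \<and>
           (\<forall>k. xs k \<in> frontier (sublevel0 f)) \<and>
           ((\<lambda>k. (f (z k) - f (xs k)) / ereal (norm (z k - xs k))) \<longlonglongrightarrow> 0)
           \<longrightarrow> liminf (\<lambda>k. \<bar>min_dirderiv f (z k)\<bar>) > ereal \<tau>)"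
      by (elim exE) (rule that)
    show ?thesis
      by (rule one_two[OF A t[THEN conjunct1] t[THEN conjunct2, THEN conjunct1] t[THEN conjunct2, THEN conjunct2]])
  qed
  have i23: "?III" if "?II" by (rule two_three[OF A that])
  have i31: "?I" if "?III" by (rule three_one[OF A that])
  show ?thesis
  proof (intro conjI iffI)
    show "?II" if "?I" using i12 that .
    show "?I" if "?II" using i31 i23 that by blast
    show "?III" if "?II" using i23 that .
    show "?II" if "?III" using i12 i31 that by blast
  qed
qed

end
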